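(* Let $d\ge1$ and let $\Sigma$ be a $d$-dimensional pseudomanifold such that $\tilde H_{d-1}(\Sigma;\mathbb{Z})=0$. Then $K_{d-1}(\Sigma)$ is a cyclic group; more precisely, for any facet $\sigma$ of $\Sigma$, the class of $\partial_d\sigma$ generates $K_{d-1}(\Sigma)$.
   Context: A $d$-dimensional pseudomanifold is a pure $d$-dimensional simplicial complex in which every $(d-1)$-dimensional face (ridge) is contained in at most two $d$-dimensional faces (facets), and which is strongly connected: for any two facets $\sigma,\sigma'$ there is a sequence of facets $\sigma=\sigma_0,\dots,\sigma_k=\sigma'$ with $\sigma_j$ and $\sigma_{j+1}$ sharing a ridge. $C_i(\Sigma;\mathbb{Z})$ is free abelian on the (fixed-orientation) $i$-faces, $\partial_i$ the simplicial boundary map, $\partial^*_i$ its transpose, $\tilde H$ reduced homology. The critical group is $K_i(\Sigma)=\ker\partial_i/\operatorname{im}(\partial_{i+1}\partial^*_{i+1})$. *)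

theory Defs
  imports Main
begin

(* Faces are finite vertex sets; the empty face is included (closure under subsets),
   which realises the augmentation needed for reduced homology.
   Faces with card n have dimension n - 1.  The fixed orientation of a face is the
   one given by the increasing order of its vertices. *)

definition simplicial_complex :: "'v set set \<Rightarrow> bool" where
  "simplicial_complex K \<longleftrightarrow> finite K \<and> K \<noteq> {} \<and> (\<forall>F\<in>K. finite F) \<and>
     (\<forall>F\<in>K. \<forall>G. G \<subseteq> F \<longrightarrow> G \<in> K)"

definition faces :: "'v set set \<Rightarrow> nat \<Rightarrow> 'v set set" where
  "faces K n = {F \<in> K. card F = n}"

definition pseudomanifold :: "'v set set \<Rightarrow> nat \<Rightarrow> bool" where
  "pseudomanifold K d \<longleftrightarrow> simplicial_complex K \<and>
     faces K (d+1) \<noteq> {} \<and>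
     (\<forall>F\<in>K. \<exists>G\<in>faces K (d+1). F \<subseteq> G) \<and>
     (\<forall>R\<in>faces K d. card {G \<in> faces K (d+1). R \<subseteq> G} \<le> 2) \<and>
     (\<forall>s\<in>faces K (d+1). \<forall>s'\<in>faces K (d+1).
        (s, s') \<in> {(a, b). a \<in> faces K (d+1) \<and> b \<in> faces K (d+1) \<and> card (a \<inter> b) = d}\<^sup>*)"

definition chains :: "'v set set \<Rightarrow> nat \<Rightarrow> ('v set \<Rightarrow> int) set" where
  "chains K n = {c. \<forall>F. F \<notin> faces K n \<longrightarrow> c F = 0}"

(* incidence number [sigma : tau] for the oriented simplicial boundary:
   if sigma = {v_0 < ... < v_i} and tau = sigma - {v_j}, it is (-1)^j *)
definition incidence :: "'v::linorder set \<Rightarrow> 'v set \<Rightarrow> int" where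
  "incidence \<sigma> \<tau> = (if \<tau> \<subseteq> \<sigma> \<and> card \<sigma> = card \<tau> + 1
      then (-1) ^ card {w \<in> \<tau>. w < the_elem (\<sigma> - \<tau>)} else 0)"

definition bd :: "'v::linorder set set \<Rightarrow> nat \<Rightarrow> ('v set \<Rightarrow> int) \<Rightarrow> ('v set \<Rightarrow> int)" where
  "bd K n c = (\<lambda>\<tau>. if \<tau> \<in> faces K (n - 1)
      then (\<Sum>\<sigma>\<in>faces K n. incidence \<sigma> \<tau> * c \<sigma>) else 0)"

definition cobd :: "'v::linorder set set \<Rightarrow> nat \<Rightarrow> ('v set \<Rightarrow> int) \<Rightarrow> ('v set \<Rightarrow> int)" where
  "cobd K n c = (\<lambda>\<sigma>. if \<sigma> \<in> faces K n
      then (\<Sum>\<tau>\<in>faces K (n - 1). incidence \<sigma> \<tau> * c \<tau>) else 0)"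

definition elem_chain :: "'v set \<Rightarrow> ('v set \<Rightarrow> int)" where
  "elem_chain \<sigma> = (\<lambda>F. if F = \<sigma> then 1 else 0)"

end

theory Submission
  imports Defs
begin

definition Mset :: "'v::linorder set set \<Rightarrow> nat \<Rightarrow> 'v set \<Rightarrow> ('v set \<Rightarrow> int) set" where
  "Mset K d \<sigma> = {f. \<exists>k::int. \<exists>c\<in>chains K d. f = (\<lambda>F. k * elem_chain \<sigma> F + cobd K (d+1) c F)}"

lemma cobd_lin: "cobd K n (\<lambda>x. a * f x + b * g x) = (\<lambda>x. a * cobd K n f x + b * cobd K n g x)"
  unfolding cobd_def by (auto simp: fun_eq_iff sum.distrib sum_distrib_left algebra_simps)

lemma bd_lin: "bd K n (\<lambda>x. a * f x + g x) = (\<lambda>x. a * bd K n f x + bd K n g x)"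
  unfolding bd_def by (auto simp: fun_eq_iff sum.distrib sum_distrib_left algebra_simps)

lemma M_lin:
  assumes "f \<in> Mset K d \<sigma>" "g \<in> Mset K d \<sigma>"
  shows "(\<lambda>x. a * f x + b * g x) \<in> Mset K d \<sigma>"
proof -
  obtain k1 c1 where 1: "c1 \<in> chains K d" "f = (\<lambda>F. k1 * elem_chain \<sigma> F + cobd K (d+1) c1 F)"
    using assms(1) unfolding Mset_def by blast
  obtain k2 c2 where 2: "c2 \<in> chains K d" "g = (\<lambda>F. k2 * elem_chain \<sigma> F + cobd K (d+1) c2 F)"
    using assms(2) unfolding Mset_def by blast
  have c: "(\<lambda>x. a * c1 x + b * c2 x) \<in> chains K d" using 1(1) 2(1) unfolding chains_def by simp
  have "(\<lambda>x. a * f x + b * g x) = (\<lambda>F. (a*k1+b*k2) * elem_chain \<sigma> F + cobd K (d+1) (\<lambda>x. a * c1 x + b * c2 x) F)"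
    unfolding 1(2) 2(2) cobd_lin by (simp add: fun_eq_iff algebra_simps)
  then show ?thesis using c unfolding Mset_def by blast
qed

lemma cobd_zero: "cobd K n (\<lambda>_. 0) = (\<lambda>_. 0)"
  unfolding cobd_def by auto

lemma M_zero: "(\<lambda>_. 0) \<in> Mset K d \<sigma>"
proof -
  have "(\<lambda>_. 0::int) \<in> chains K d" unfolding chains_def by simp
  moreover have "(\<lambda>_. 0::int) = (\<lambda>F. 0 * elem_chain \<sigma> F + cobd K (d+1) (\<lambda>_. 0) F)"
    by (simp add: cobd_zero)
  ultimately show ?thesis unfolding Mset_def by blast
qed

lemma M_sum:
  assumes "finite A" "\<forall>\<tau>\<in>A. g \<tau> \<in> Mset K d \<sigma>"
  shows "(\<lambda>x. \<Sum>\<tau>\<in>A. h \<tau> * g \<tau> x) \<in> Mset K d \<sigma>"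
  using assms
proof (induction A rule: finite_induct)
  case empty
  then show ?case using M_zero by simp
next
  case (insert a A)
  have "(\<lambda>x. h a * g a x + 1 * (\<Sum>\<tau>\<in>A. h \<tau> * g \<tau> x)) \<in> Mset K d \<sigma>"
    using insert by (intro M_lin) auto
  then show ?case using insert by simp
qed

theorem mainTheorem10:
  fixes K :: "'v::linorder set set" and d :: nat
  assumes "d \<ge> 1"
    and "pseudomanifold K d"
    and "\<forall>z\<in>chains K d. bd K d z = (\<lambda>_. 0) \<longrightarrow>
           (\<exists>b\<in>chains K (d+1). bd K (d+1) b = z)"
  shows "\<forall>\<sigma>\<in>faces K (d+1). \<forall>z\<in>chains K d. bd K d z = (\<lambda>_. 0) \<longrightarrow>
           (\<exists>k::int. \<exists>c\<in>chains K d.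
              z = (\<lambda>F. k * bd K (d+1) (elem_chain \<sigma>) F + bd K (d+1) (cobd K (d+1) c) F))"
proof (intro ballI impI)
  fix \<sigma> z
  assume \<sigma>: "\<sigma> \<in> faces K (d+1)" and zc: "z \<in> chains K d" and zcyc: "bd K d z = (\<lambda>_. 0)"
  have sc: "simplicial_complex K" using assms(2) unfolding pseudomanifold_def by blast
  have finK: "finite K" using sc unfolding simplicial_complex_def by blast
  have finF: "finite (faces K (d+1))" using finK unfolding faces_def by simp
  define rel where "rel = {(a, b). a \<in> faces K (d+1) \<and> b \<in> faces K (d+1) \<and> card (a \<inter> b) = d}"
  have conn: "(\<sigma>, s') \<in> rel\<^sup>*" if "s' \<in> faces K (d+1)" for s'
    using assms(2) \<sigma> that unfolding pseudomanifold_def rel_def by blast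
  have elemM: "elem_chain \<tau> \<in> Mset K d \<sigma>" if "\<tau> \<in> faces K (d+1)" for \<tau>
  proof -
    have "(\<sigma>, \<tau>) \<in> rel\<^sup>*" using conn that .
    then show ?thesis
    proof (induction rule: rtrancl_induct)
      case base
      have "(\<lambda>_. 0::int) \<in> chains K d" unfolding chains_def by simp
      moreover have "elem_chain \<sigma> = (\<lambda>F. 1 * elem_chain \<sigma> F + cobd K (d+1) (\<lambda>_. 0) F)"
        by (simp add: cobd_zero)
      ultimately show ?case unfolding Mset_def by blast
    next
      case (step y w)
      have y: "y \<in> faces K (d+1)" and w: "w \<in> faces K (d+1)" and cyw: "card (y \<inter> w) = d"
        using step(2) unfolding rel_def by auto
      define R where "R = y \<inter> w"
      have yK: "y \<in> K" "card y = d+1" using y unfolding faces_def by auto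
      have wK: "w \<in> K" "card w = d+1" using w unfolding faces_def by auto
      have RK: "R \<in> K" using sc yK unfolding simplicial_complex_def R_def by blast
      have R: "R \<in> faces K d" using RK cyw unfolding faces_def R_def by simp
      have yw: "y \<noteq> w" using cyw yK by auto
      have le2: "card {G \<in> faces K (d+1). R \<subseteq> G} \<le> 2"
        using assms(2) R unfolding pseudomanifold_def by blast
      have sub: "{y, w} \<subseteq> {G \<in> faces K (d+1). R \<subseteq> G}" using y w unfolding R_def by auto
      have fin2: "finite {G \<in> faces K (d+1). R \<subseteq> G}" using finF by simp
      have eq: "{G \<in> faces K (d+1). R \<subseteq> G} = {y, w}"
      proof (rule ccontr)
        assume "{G \<in> faces K (d+1). R \<subseteq> G} \<noteq> {y, w}"
        then have "{y,w} \<subset> {G \<in> faces K (d+1). R \<subseteq> G}" using sub by blast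
        then have "card {y,w} < card {G \<in> faces K (d+1). R \<subseteq> G}" by (rule psubset_card_mono[OF fin2])
        then show False using le2 yw by simp
      qed
      have cR: "card R = d" using cyw R_def by simp
      have incsq: "incidence F R * incidence F R = 1" if "F \<in> {y,w}" for F
      proof -
        have "R \<subseteq> F" "card F = card R + 1" using that yK wK cR unfolding R_def by auto
        then show ?thesis unfolding incidence_def
          by (simp add: power_mult_distrib[symmetric] flip: power_add mult_2)
      qed
      have cobdR: "cobd K (d+1) (elem_chain R) = (\<lambda>F. incidence y R * elem_chain y F + incidence w R * elem_chain w F)"
      proof
        fix F
        show "cobd K (d+1) (elem_chain R) F = incidence y R * elem_chain y F + incidence w R * elem_chain w F"
        proof (cases "F \<in> faces K (d+1)")
          case True
          have s: "(\<Sum>\<tau>\<in>faces K d. incidence F \<tau> * elem_chain R \<tau>) = incidence F R"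
            using R finK unfolding elem_chain_def faces_def
            by (simp add: if_distrib sum.delta cong: if_cong)
          show ?thesis
          proof (cases "F \<in> {y,w}")
            case True
            then show ?thesis using s \<open>F \<in> faces K (d+1)\<close> yw unfolding cobd_def elem_chain_def by auto
          next
            case False
            then have "\<not> R \<subseteq> F" using eq True by blast
            then have "incidence F R = 0" unfolding incidence_def by simp
            then show ?thesis using s True False unfolding cobd_def elem_chain_def by auto
          qed
        next
          case False
          then show ?thesis using y w unfolding cobd_def elem_chain_def by auto
        qed
      qed
      have eRc: "elem_chain R \<in> chains K d" using R unfolding chains_def elem_chain_def by auto
      have cM: "cobd K (d+1) (elem_chain R) \<in> Mset K d \<sigma>"
      proof -
        have "cobd K (d+1) (elem_chain R) = (\<lambda>F. 0 * elem_chain \<sigma> F + cobd K (d+1) (elem_chain R) F)" by simp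
        then show ?thesis using eRc unfolding Mset_def by blast
      qed
      have "(\<lambda>x. incidence w R * cobd K (d+1) (elem_chain R) x + (- incidence w R * incidence y R) * elem_chain y x) \<in> Mset K d \<sigma>"
        using cM step(3) by (rule M_lin)
      moreover have "(\<lambda>x. incidence w R * cobd K (d+1) (elem_chain R) x + (- incidence w R * incidence y R) * elem_chain y x) = elem_chain w"
        using incsq[of w] unfolding cobdR by (auto simp: fun_eq_iff algebra_simps)
      ultimately show ?case by simp
    qed
  qed
  obtain b where bc: "b \<in> chains K (d+1)" and bz: "bd K (d+1) b = z" using assms(3) zc zcyc by blast
  have "b = (\<lambda>x. \<Sum>\<tau>\<in>faces K (d+1). b \<tau> * elem_chain \<tau> x)"
  proof
    fix x
    show "b x = (\<Sum>\<tau>\<in>faces K (d+1). b \<tau> * elem_chain \<tau> x)"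
      using bc finF unfolding chains_def elem_chain_def
      by (cases "x \<in> faces K (d+1)") (auto simp: if_distrib sum.delta' cong: if_cong)
  qed
  moreover have "(\<lambda>x. \<Sum>\<tau>\<in>faces K (d+1). b \<tau> * elem_chain \<tau> x) \<in> Mset K d \<sigma>"
    using finF elemM by (intro M_sum) auto
  ultimately have "b \<in> Mset K d \<sigma>" by simp
  then obtain k c where c: "c \<in> chains K d" and bkc: "b = (\<lambda>F. k * elem_chain \<sigma> F + cobd K (d+1) c F)"
    unfolding Mset_def by blast
  have "z = (\<lambda>F. k * bd K (d+1) (elem_chain \<sigma>) F + bd K (d+1) (cobd K (d+1) c) F)"
    using bz unfolding bkc bd_lin by simp
  then show "\<exists>k::int. \<exists>c\<in>chains K d.
              z = (\<lambda>F. k * bd K (d+1) (elem_chain \<sigma>) F + bd K (d+1) (cobd K (d+1) c) F)"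
    using c by blast
qed

end
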